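(* Let $n \ge 2$ be an integer. For $1 \le i \le n-1$ and $j = n-i$, define the polynomial $$P_i(t) = \left(1 + t\sqrt{\tfrac{j}{i}}\right)^{i}\left(1 - t\sqrt{\tfrac{i}{j}}\right)^{j}.$$ If $1 \le i \le n-2$ (and $j = n-i$), then $P_i(t) > P_{i+1}(t)$ for all $0 < t < \sqrt{\frac{j-1}{i+1}}$. Consequently, $$P_{n-1}(t) < \dots < P_2(t) < P_1(t) \quad \text{for } 0 < t < \frac{1}{\sqrt{n-1}}.$$ *)

theory Defs
  imports Complex_Main
begin

definition P :: "nat \<Rightarrow> nat \<Rightarrow> real \<Rightarrow> real" where
  "P n i t = (1 + t * sqrt (real (n - i) / real i)) ^ i
             * (1 - t * sqrt (real i / real (n - i))) ^ (n - i)"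

end

theory Submission
  imports Defs
begin

lemma Lderiv:
  fixes p q a t :: real
  assumes "a > 0" "1 + t*a > 0" "1 - t/a > 0"
  shows "((\<lambda>s. p*ln(1+s*a) + q*ln(1-s/a)) has_real_derivative
          (p*(a/(1+t*a)) + q*((-(1/a))/(1-t/a)))) (at t)"
  using assms by (auto intro!: derivative_eq_intros simp: mult.commute)

lemma deriv_simp:
  fixes p q a t :: real
  assumes "p > 0" "q > 0" "a = sqrt (q/p)" "1 + t*a > 0" "1 - t/a > 0"
  shows "p*(a/(1+t*a)) + q*((-(1/a))/(1-t/a)) = - (p+q) * t / (1 + t*(a - 1/a) - t^2)"
proof -
  have a0: "a > 0" using assms by simp
  have aa: "a*a = q/p" using assms by (simp add: real_sqrt_mult_self)
  have pa: "p*a = q/a" using aa a0 assms(1) by (simp add: field_simps)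
  have D: "(1+t*a)*(1-t/a) = 1 + t*(a - 1/a) - t^2" using a0
    by (simp add: field_simps power2_eq_square)
  have Dp: "(1+t*a)*(1-t/a) > 0" using assms by simp
  have "p*(a/(1+t*a)) + q*((-(1/a))/(1-t/a)) = (p*a)/(1+t*a) + (-(q/a))/(1-t/a)"
    by simp
  also have "\<dots> = (p*a*(1-t/a) + (-(q/a))*(1+t*a)) / ((1+t*a)*(1-t/a))"
    using assms(4,5) by (intro add_frac_eq) auto
  finally have "p*(a/(1+t*a)) + q*((-(1/a))/(1-t/a))
      = (p*a*(1-t/a) - (q/a)*(1+t*a)) / ((1+t*a)*(1-t/a))" by simp
  also have "p*a*(1-t/a) - (q/a)*(1+t*a) = -(p+q)*t"
    using pa a0 by (simp add: field_simps)
  finally show ?thesis using D by simp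
qed

lemma key:
  fixes p q p' q' a b t N :: real
  assumes "p>0" "q>0" "p'>0" "q'>0" "p+q = N" "p'+q' = N"
    "a = sqrt(q/p)" "b = sqrt(q'/p')" "b < a" "0<t" "t<b"
  shows "p*ln(1+t*a)+q*ln(1-t/a) > p'*ln(1+t*b)+q'*ln(1-t/b)"
proof -
  have a0: "a > 0" "b > 0" using assms by auto
  define g where "g s = (p*ln(1+s*a)+q*ln(1-s/a)) - (p'*ln(1+s*b)+q'*ln(1-s/b))" for s
  define g' where "g' s = (p*(a/(1+s*a)) + q*((-(1/a))/(1-s/a)))
      - (p'*(b/(1+s*b)) + q'*((-(1/b))/(1-s/b)))" for s
  have pos: "1+s*a > 0" "1-s/a > 0" "1+s*b > 0" "1-s/b > 0" if "0 \<le> s" "s \<le> t" for s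
  proof -
    show "1+s*a > 0" "1+s*b > 0" using a0 that by (simp_all add: add_pos_nonneg)
    have "s < b" "s < a" using that assms(9,11) by linarith+
    then show "1-s/a > 0" "1-s/b > 0" using a0 by (simp_all add: field_simps)
  qed
  have "DERIV g s :> g' s" if s: "0 \<le> s \<and> s \<le> t" for s
  proof -
    show "DERIV g s :> g' s"
      unfolding g_def[abs_def] g'_def
      by (intro DERIV_diff Lderiv) (use pos s a0 in auto)
  qed
  from MVT2[OF assms(10), of g g', OF this] obtain z where z: "0 < z" "z < t" "g t - g 0 = (t - 0) * g' z"
    by auto
  have zp: "1+z*a > 0" "1-z/a > 0" "1+z*b > 0" "1-z/b > 0" using pos[of z] z by auto
  define Da where "Da = 1 + z*(a - 1/a) - z^2"
  define Db where "Db = 1 + z*(b - 1/b) - z^2"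
  have g'z: "g' z = -N*z/Da + N*z/Db"
    unfolding g'_def Da_def Db_def
    using deriv_simp[OF assms(1,2,7) zp(1,2)] deriv_simp[OF assms(3,4,8) zp(3,4)] assms(5,6)
    by simp
  have Dbp: "Db > 0"
  proof -
    have "(1+z*b)*(1-z/b) = Db" unfolding Db_def using a0 by (simp add: field_simps power2_eq_square)
    with zp show ?thesis by (metis mult_pos_pos)
  qed
  have "1/a < 1/b" using a0 assms(9) by (simp add: frac_less2)
  hence "a - 1/a > b - 1/b" using assms(9) by simp
  hence "Da > Db" unfolding Da_def Db_def using z by (simp add: mult_strict_left_mono)
  hence "1/Da < 1/Db" using Dbp by (simp add: frac_less2)
  moreover have "N*z > 0" using assms z by simp
  ultimately have "(N*z) * (1/Da) < (N*z) * (1/Db)" by (rule mult_strict_left_mono)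
  hence "g' z > 0" unfolding g'z by simp
  hence "t * g' z > 0" using assms(10) by (simp add: mult_pos_pos)
  hence "g t > g 0" using z(3) by simp
  moreover have "g 0 = 0" unfolding g_def by simp
  ultimately show ?thesis unfolding g_def by simp
qed

lemma part1:
  fixes n i :: nat and t :: real
  assumes "1 \<le> i" "i \<le> n - 2" "0 < t" "t < sqrt (real (n - i - 1) / real (i + 1))"
  shows "P n i t > P n (i + 1) t"
proof -
  define p where "p = real i"
  define q where "q = real (n - i)"
  define p' where "p' = real (i+1)"
  define q' where "q' = real (n - (i+1))"
  define a where "a = sqrt (q/p)"
  define b where "b = sqrt (q'/p')"
  have ps: "p>0" "q>0" "p'>0" "q'>0" using assms unfolding p_def q_def p'_def q'_def by auto
  have N: "p+q = real n" "p'+q' = real n" using assms unfolding p_def q_def p'_def q'_def by auto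
  have tb: "t < b" using assms unfolding b_def q'_def p'_def by (simp add: diff_diff_add)
  have "q'/p' < q/p" using ps assms unfolding p_def q_def p'_def q'_def
    by (simp add: field_simps of_nat_diff)
  hence ba: "b < a" unfolding a_def b_def by simp
  have a0: "a > 0" "b > 0" using ps unfolding a_def b_def by auto
  have inv: "sqrt (p/q) = 1/a" "sqrt (p'/q') = 1/b" unfolding a_def b_def
    by (simp_all add: real_sqrt_divide)
  have e1: "sqrt(real(n-i)/real i) = a" "sqrt(real i/real(n-i)) = 1/a"
    using inv(1) unfolding a_def p_def q_def by auto
  have e2: "sqrt(real(n-(i+1))/real (i+1)) = b" "sqrt(real (i+1)/real(n-(i+1))) = 1/b"
    using inv(2) unfolding b_def p'_def q'_def by auto
  have P1: "P n i t = (1+t*a)^i * (1-t/a)^(n-i)"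
    unfolding P_def e1 by simp
  have P2: "P n (i+1) t = (1+t*b)^(i+1) * (1-t/b)^(n-(i+1))"
    unfolding P_def e2 by simp
  have pos: "1+t*a > 0" "1-t/a > 0" "1+t*b > 0" "1-t/b > 0"
    using a0 assms tb ba by (auto simp: field_simps add_pos_nonneg)
  have l1: "ln (P n i t) = p*ln(1+t*a)+q*ln(1-t/a)"
  proof -
    have "ln (P n i t) = ln((1+t*a)^i) + ln((1-t/a)^(n-i))"
      unfolding P1 by (rule ln_mult_pos) (use pos in auto)
    also have "\<dots> = p*ln(1+t*a)+q*ln(1-t/a)"
      unfolding p_def q_def using pos by (simp only: ln_realpow)
    finally show ?thesis .
  qed
  have l2: "ln (P n (i+1) t) = p'*ln(1+t*b)+q'*ln(1-t/b)"
  proof -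
    have "ln (P n (i+1) t) = ln((1+t*b)^(i+1)) + ln((1-t/b)^(n-(i+1)))"
      unfolding P2 by (rule ln_mult_pos) (use pos in auto)
    also have "\<dots> = p'*ln(1+t*b)+q'*ln(1-t/b)"
      unfolding p'_def q'_def using pos by (simp only: ln_realpow)
    finally show ?thesis .
  qed
  have "ln (P n (i+1) t) < ln (P n i t)"
    unfolding l1 l2 by (rule key[OF ps N a_def b_def ba assms(3) tb])
  moreover have "P n i t > 0" "P n (i+1) t > 0" unfolding P1 P2 using pos by auto
  ultimately show ?thesis by simp
qed

theorem lemma2:
  fixes n :: nat
  assumes "n \<ge> 2"
  shows "(\<forall>i t. 1 \<le> i \<and> i \<le> n - 2 \<and> 0 < t
            \<and> t < sqrt (real (n - i - 1) / real (i + 1))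
            \<longrightarrow> P n i t > P n (i + 1) t)
       \<and> (\<forall>t. 0 < t \<and> t < 1 / sqrt (real n - 1)
            \<longrightarrow> (\<forall>i. 1 \<le> i \<and> i \<le> n - 2 \<longrightarrow> P n (i + 1) t < P n i t))"
proof (intro conjI allI impI)
  fix i t assume "1 \<le> i \<and> i \<le> n - 2 \<and> 0 < t \<and> t < sqrt (real (n - i - 1) / real (i + 1))"
  thus "P n i t > P n (i + 1) t" using part1 by blast
next
  fix t i assume t: "0 < t \<and> t < 1 / sqrt (real n - 1)" and i: "1 \<le> i \<and> i \<le> n - 2"
  have "1 / real (n-1) \<le> 1 / real (i+1)"
    using i assms by (intro divide_left_mono) auto
  also have "\<dots> \<le> real (n - i - 1) / real (i + 1)"
    using i assms by (intro divide_right_mono) auto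
  finally have "1 / real (n-1) \<le> real (n - i - 1) / real (i + 1)" .
  hence "sqrt (1 / real (n-1)) \<le> sqrt (real (n - i - 1) / real (i + 1))" by simp
  moreover have "1 / sqrt (real n - 1) = sqrt (1 / real (n-1))"
    using assms by (simp add: real_sqrt_divide of_nat_diff)
  ultimately have "t < sqrt (real (n - i - 1) / real (i + 1))" using t by linarith
  thus "P n (i + 1) t < P n i t" using part1 i t by blast
qed

end
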